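(* Let $\nabla$ be a connection on an anchored vector bundle $(A,a_A)$ over $M$, let $[x,y]^\nabla=\nabla_xy-\nabla_yx$, and let $R^\nabla(x,y)z=\nabla_x\nabla_yz-\nabla_y\nabla_xz-\nabla_{[x,y]^\nabla}z$. The following are equivalent: (1) for all $x,y\in\Gamma(A)$ the map $z\mapsto R^\nabla(x,y)z$ is $C^\infty(M)$-linear; (2) $(A,[\cdot,\cdot]^\nabla,a_A)$ is a dull algebroid.
   Context: A connection on the anchored bundle $(A,a_A)$ (with $a_A:A\to TM$ a bundle map) is an $\mathbb{R}$-bilinear operator $\nabla:\Gamma(A)\times\Gamma(A)\to\Gamma(A)$ with $\nabla_{fx}y=f\nabla_xy$ and $\nabla_x(fy)=a_A(x)(f)\,y+f\nabla_xy$. A dull algebroid is a triple $(A,[\cdot,\cdot],a_A)$ where $[\cdot,\cdot]$ is a skew-symmetric $\mathbb{R}$-bilinear bracket on $\Gamma(A)$ with $[x,fy]=f[x,y]+a_A(x)(f)y$ and additionally $a_A([x,y])=[a_A(x),a_A(y)]$ for all $x,y\in\Gamma(A)$. *)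

theory Defs
  imports "HOL-Analysis.Analysis"
begin

fun dderiv :: "'a list \<Rightarrow> ('a::real_normed_vector \<Rightarrow> 'b::real_normed_vector) \<Rightarrow> 'a \<Rightarrow> 'b" where
  "dderiv [] f = f"
| "dderiv (v # vs) f = (\<lambda>x. frechet_derivative (dderiv vs f) (at x) v)"

definition smooth_on :: "'a::euclidean_space set \<Rightarrow> ('a \<Rightarrow> 'b::real_normed_vector) \<Rightarrow> bool" where
  "smooth_on S f \<longleftrightarrow> open S \<and> (\<forall>vs. \<forall>x\<in>S. dderiv vs f differentiable (at x))"

definition smooth_manifold :: "'M topology \<Rightarrow> ('M set \<times> ('M \<Rightarrow> 'e::euclidean_space)) set \<Rightarrow> bool" where
  "smooth_manifold X Atl \<longleftrightarrow>
     topspace X = UNIV \<and> Hausdorff_space X \<and> second_countable X \<and>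
     \<Union> (fst ` Atl) = UNIV \<and>
     (\<forall>(U, \<phi>) \<in> Atl. openin X U \<and> open (\<phi> ` U) \<and>
        homeomorphic_map (subtopology X U) (top_of_set (\<phi> ` U)) \<phi>) \<and>
     (\<forall>(U, \<phi>) \<in> Atl. \<forall>(V, \<psi>) \<in> Atl. smooth_on (\<phi> ` (U \<inter> V)) (\<psi> \<circ> inv_into U \<phi>))"

definition smooth_map_on :: "('M set \<times> ('M \<Rightarrow> 'e::euclidean_space)) set \<Rightarrow> 'M set \<Rightarrow> ('M \<Rightarrow> 'b::real_normed_vector) \<Rightarrow> bool" where
  "smooth_map_on Atl W f \<longleftrightarrow> (\<forall>(U, \<phi>) \<in> Atl. smooth_on (\<phi> ` (U \<inter> W)) (f \<circ> inv_into U \<phi>))"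

definition smooth_fun :: "('M set \<times> ('M \<Rightarrow> 'e::euclidean_space)) set \<Rightarrow> ('M \<Rightarrow> real) \<Rightarrow> bool" where
  "smooth_fun Atl f \<longleftrightarrow> smooth_map_on Atl UNIV f"

text \<open>Vector fields, as derivations of C^\<infinity>(M).\<close>
definition vector_field :: "('M set \<times> ('M \<Rightarrow> 'e::euclidean_space)) set \<Rightarrow> (('M \<Rightarrow> real) \<Rightarrow> ('M \<Rightarrow> real)) \<Rightarrow> bool" where
  "vector_field Atl D \<longleftrightarrow>
     (\<forall>f. smooth_fun Atl f \<longrightarrow> smooth_fun Atl (D f)) \<and>
     (\<forall>f g. smooth_fun Atl f \<longrightarrow> smooth_fun Atl g \<longrightarrow> D (\<lambda>p. f p + g p) = (\<lambda>p. D f p + D g p)) \<and>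
     (\<forall>c f. smooth_fun Atl f \<longrightarrow> D (\<lambda>p. c * f p) = (\<lambda>p. c * D f p)) \<and>
     (\<forall>f g. smooth_fun Atl f \<longrightarrow> smooth_fun Atl g \<longrightarrow> D (\<lambda>p. f p * g p) = (\<lambda>p. f p * D g p + g p * D f p))"

text \<open>Trivialising cover U indexed by 'i, fibre 'v, transition functions g i j on U i \<inter> U j;
  a local representative s i of a section satisfies s i = g i j (s j) on overlaps.\<close>
definition vector_bundle ::
  "'M topology \<Rightarrow> ('M set \<times> ('M \<Rightarrow> 'e::euclidean_space)) set \<Rightarrow> ('i \<Rightarrow> 'M set) \<Rightarrow>
   ('i \<Rightarrow> 'i \<Rightarrow> 'M \<Rightarrow> ('v::euclidean_space \<Rightarrow>\<^sub>L 'v)) \<Rightarrow> bool" where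
  "vector_bundle X Atl U g \<longleftrightarrow>
     smooth_manifold X Atl \<and> (\<forall>i. openin X (U i)) \<and> (\<Union>i. U i) = UNIV \<and>
     (\<forall>i j. smooth_map_on Atl (U i \<inter> U j) (g i j)) \<and>
     (\<forall>i p. p \<in> U i \<longrightarrow> g i i p = id_blinfun) \<and>
     (\<forall>i j k p. p \<in> U i \<inter> U j \<inter> U k \<longrightarrow> g i j p o\<^sub>L g j k p = g i k p)"

text \<open>\<Gamma>(A): smooth sections, as compatible families of local representatives (zero off U i).\<close>
definition sections ::
  "('M set \<times> ('M \<Rightarrow> 'e::euclidean_space)) set \<Rightarrow> ('i \<Rightarrow> 'M set) \<Rightarrow>
   ('i \<Rightarrow> 'i \<Rightarrow> 'M \<Rightarrow> ('v::euclidean_space \<Rightarrow>\<^sub>L 'v)) \<Rightarrow> ('i \<Rightarrow> 'M \<Rightarrow> 'v) set" where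
  "sections Atl U g = {s. (\<forall>i p. p \<notin> U i \<longrightarrow> s i p = 0) \<and>
                          (\<forall>i. smooth_map_on Atl (U i) (s i)) \<and>
                          (\<forall>i j p. p \<in> U i \<inter> U j \<longrightarrow> s i p = blinfun_apply (g i j p) (s j p))}"

definition sec_add :: "('i \<Rightarrow> 'M \<Rightarrow> 'v::real_vector) \<Rightarrow> ('i \<Rightarrow> 'M \<Rightarrow> 'v) \<Rightarrow> ('i \<Rightarrow> 'M \<Rightarrow> 'v)" where
  "sec_add s t = (\<lambda>i p. s i p + t i p)"

definition sec_diff :: "('i \<Rightarrow> 'M \<Rightarrow> 'v::real_vector) \<Rightarrow> ('i \<Rightarrow> 'M \<Rightarrow> 'v) \<Rightarrow> ('i \<Rightarrow> 'M \<Rightarrow> 'v)" where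
  "sec_diff s t = (\<lambda>i p. s i p - t i p)"

definition sec_smult :: "('M \<Rightarrow> real) \<Rightarrow> ('i \<Rightarrow> 'M \<Rightarrow> 'v::real_vector) \<Rightarrow> ('i \<Rightarrow> 'M \<Rightarrow> 'v)" where
  "sec_smult f s = (\<lambda>i p. f p *\<^sub>R s i p)"

definition sec_scale :: "real \<Rightarrow> ('i \<Rightarrow> 'M \<Rightarrow> 'v::real_vector) \<Rightarrow> ('i \<Rightarrow> 'M \<Rightarrow> 'v)" where
  "sec_scale c s = (\<lambda>i p. c *\<^sub>R s i p)"

text \<open>An anchor a_A : A \<rightarrow> TM, represented (as usual) by the induced C^\<infinity>(M)-linear map
  \<Gamma>(A) \<rightarrow> \<X>(M) on sections; a(x)(f) is the derivative of f along a(x).\<close>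
definition anchored_bundle ::
  "'M topology \<Rightarrow> ('M set \<times> ('M \<Rightarrow> 'e::euclidean_space)) set \<Rightarrow> ('i \<Rightarrow> 'M set) \<Rightarrow>
   ('i \<Rightarrow> 'i \<Rightarrow> 'M \<Rightarrow> ('v::euclidean_space \<Rightarrow>\<^sub>L 'v)) \<Rightarrow>
   (('i \<Rightarrow> 'M \<Rightarrow> 'v) \<Rightarrow> ('M \<Rightarrow> real) \<Rightarrow> ('M \<Rightarrow> real)) \<Rightarrow> bool" where
  "anchored_bundle X Atl U g a \<longleftrightarrow>
     vector_bundle X Atl U g \<and>
     (\<forall>x \<in> sections Atl U g. vector_field Atl (a x)) \<and>
     (\<forall>x \<in> sections Atl U g. \<forall>y \<in> sections Atl U g. \<forall>h. smooth_fun Atl h \<longrightarrow>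
         a (sec_add x y) h = (\<lambda>p. a x h p + a y h p)) \<and>
     (\<forall>x \<in> sections Atl U g. \<forall>f h. smooth_fun Atl f \<longrightarrow> smooth_fun Atl h \<longrightarrow>
         a (sec_smult f x) h = (\<lambda>p. f p * a x h p))"

definition connection ::
  "'M topology \<Rightarrow> ('M set \<times> ('M \<Rightarrow> 'e::euclidean_space)) set \<Rightarrow> ('i \<Rightarrow> 'M set) \<Rightarrow>
   ('i \<Rightarrow> 'i \<Rightarrow> 'M \<Rightarrow> ('v::euclidean_space \<Rightarrow>\<^sub>L 'v)) \<Rightarrow>
   (('i \<Rightarrow> 'M \<Rightarrow> 'v) \<Rightarrow> ('M \<Rightarrow> real) \<Rightarrow> ('M \<Rightarrow> real)) \<Rightarrow>
   (('i \<Rightarrow> 'M \<Rightarrow> 'v) \<Rightarrow> ('i \<Rightarrow> 'M \<Rightarrow> 'v) \<Rightarrow> ('i \<Rightarrow> 'M \<Rightarrow> 'v)) \<Rightarrow> bool" where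
  "connection X Atl U g a nabla \<longleftrightarrow>
     (let \<Gamma> = sections Atl U g in
     (\<forall>x\<in>\<Gamma>. \<forall>y\<in>\<Gamma>. nabla x y \<in> \<Gamma>) \<and>
     (\<forall>x\<in>\<Gamma>. \<forall>x'\<in>\<Gamma>. \<forall>y\<in>\<Gamma>. nabla (sec_add x x') y = sec_add (nabla x y) (nabla x' y)) \<and>
     (\<forall>x\<in>\<Gamma>. \<forall>y\<in>\<Gamma>. \<forall>y'\<in>\<Gamma>. nabla x (sec_add y y') = sec_add (nabla x y) (nabla x y')) \<and>
     (\<forall>c. \<forall>x\<in>\<Gamma>. \<forall>y\<in>\<Gamma>. nabla (sec_scale c x) y = sec_scale c (nabla x y)) \<and>
     (\<forall>c. \<forall>x\<in>\<Gamma>. \<forall>y\<in>\<Gamma>. nabla x (sec_scale c y) = sec_scale c (nabla x y)) \<and>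
     (\<forall>f. smooth_fun Atl f \<longrightarrow> (\<forall>x\<in>\<Gamma>. \<forall>y\<in>\<Gamma>. nabla (sec_smult f x) y = sec_smult f (nabla x y))) \<and>
     (\<forall>f. smooth_fun Atl f \<longrightarrow> (\<forall>x\<in>\<Gamma>. \<forall>y\<in>\<Gamma>.
         nabla x (sec_smult f y) = sec_add (sec_smult (a x f) y) (sec_smult f (nabla x y)))))"

definition dull_algebroid ::
  "'M topology \<Rightarrow> ('M set \<times> ('M \<Rightarrow> 'e::euclidean_space)) set \<Rightarrow> ('i \<Rightarrow> 'M set) \<Rightarrow>
   ('i \<Rightarrow> 'i \<Rightarrow> 'M \<Rightarrow> ('v::euclidean_space \<Rightarrow>\<^sub>L 'v)) \<Rightarrow>
   (('i \<Rightarrow> 'M \<Rightarrow> 'v) \<Rightarrow> ('i \<Rightarrow> 'M \<Rightarrow> 'v) \<Rightarrow> ('i \<Rightarrow> 'M \<Rightarrow> 'v)) \<Rightarrow>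
   (('i \<Rightarrow> 'M \<Rightarrow> 'v) \<Rightarrow> ('M \<Rightarrow> real) \<Rightarrow> ('M \<Rightarrow> real)) \<Rightarrow> bool" where
  "dull_algebroid X Atl U g br a \<longleftrightarrow>
     anchored_bundle X Atl U g a \<and>
     (let \<Gamma> = sections Atl U g in
     (\<forall>x\<in>\<Gamma>. \<forall>y\<in>\<Gamma>. br x y \<in> \<Gamma>) \<and>
     (\<forall>x\<in>\<Gamma>. \<forall>y\<in>\<Gamma>. br x y = sec_scale (-1) (br y x)) \<and>
     (\<forall>x\<in>\<Gamma>. \<forall>y\<in>\<Gamma>. \<forall>y'\<in>\<Gamma>. br x (sec_add y y') = sec_add (br x y) (br x y')) \<and>
     (\<forall>c. \<forall>x\<in>\<Gamma>. \<forall>y\<in>\<Gamma>. br x (sec_scale c y) = sec_scale c (br x y)) \<and>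
     (\<forall>f. smooth_fun Atl f \<longrightarrow> (\<forall>x\<in>\<Gamma>. \<forall>y\<in>\<Gamma>.
         br x (sec_smult f y) = sec_add (sec_smult f (br x y)) (sec_smult (a x f) y))) \<and>
     (\<forall>x\<in>\<Gamma>. \<forall>y\<in>\<Gamma>. \<forall>h. smooth_fun Atl h \<longrightarrow>
         a (br x y) h = (\<lambda>p. a x (a y h) p - a y (a x h) p)))"

definition nabla_bracket :: "(('i \<Rightarrow> 'M \<Rightarrow> 'v::real_vector) \<Rightarrow> ('i \<Rightarrow> 'M \<Rightarrow> 'v) \<Rightarrow> ('i \<Rightarrow> 'M \<Rightarrow> 'v)) \<Rightarrow>
   ('i \<Rightarrow> 'M \<Rightarrow> 'v) \<Rightarrow> ('i \<Rightarrow> 'M \<Rightarrow> 'v) \<Rightarrow> ('i \<Rightarrow> 'M \<Rightarrow> 'v)" where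
  "nabla_bracket nabla x y = sec_diff (nabla x y) (nabla y x)"

definition curvature :: "(('i \<Rightarrow> 'M \<Rightarrow> 'v::real_vector) \<Rightarrow> ('i \<Rightarrow> 'M \<Rightarrow> 'v) \<Rightarrow> ('i \<Rightarrow> 'M \<Rightarrow> 'v)) \<Rightarrow>
   ('i \<Rightarrow> 'M \<Rightarrow> 'v) \<Rightarrow> ('i \<Rightarrow> 'M \<Rightarrow> 'v) \<Rightarrow> ('i \<Rightarrow> 'M \<Rightarrow> 'v) \<Rightarrow> ('i \<Rightarrow> 'M \<Rightarrow> 'v)" where
  "curvature nabla x y z =
     sec_diff (sec_diff (nabla x (nabla y z)) (nabla y (nabla x z))) (nabla (nabla_bracket nabla x y) z)"

end

theory Submission
  imports Defs
begin

lemma hd_open_cong: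
  assumes "open S" "x \<in> S" "\<And>y. y \<in> S \<Longrightarrow> F y = G y"
  shows "(F has_derivative D) (at x) \<longleftrightarrow> (G has_derivative D) (at x)"
  using has_derivative_transform_within_open[of F D x UNIV S G]
        has_derivative_transform_within_open[of G D x UNIV S F] assms by auto

lemma fd_open_cong:
  assumes "open S" "x \<in> S" "\<And>y. y \<in> S \<Longrightarrow> F y = G y"
  shows "frechet_derivative F (at x) = frechet_derivative G (at x)"
  unfolding frechet_derivative_def using hd_open_cong[OF assms] by simp

lemma diff_open_cong:
  assumes "open S" "x \<in> S" "\<And>y. y \<in> S \<Longrightarrow> F y = G y"
  shows "F differentiable (at x) \<longleftrightarrow> G differentiable (at x)"
  unfolding differentiable_def using hd_open_cong[OF assms] by simp

lemma dderiv_open_cong: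
  assumes "open S" "\<And>y. y \<in> S \<Longrightarrow> F y = G y" "x \<in> S"
  shows "dderiv vs F x = dderiv vs G x"
  using assms(3)
proof (induction vs arbitrary: x)
  case Nil then show ?case using assms by simp
next
  case (Cons v vs)
  have "frechet_derivative (dderiv vs F) (at x) = frechet_derivative (dderiv vs G) (at x)"
    by (rule fd_open_cong[OF assms(1) Cons.prems]) (rule Cons.IH)
  then show ?case by simp
qed

lemma dderiv_snoc: "dderiv (vs @ [v]) F = dderiv vs (dderiv [v] F)"
  by (induction vs) auto

definition su :: "nat \<Rightarrow> 'a::euclidean_space set \<Rightarrow> ('a \<Rightarrow> 'b::real_normed_vector) \<Rightarrow> bool" where
  "su n S f \<longleftrightarrow> open S \<and> (\<forall>vs. length vs \<le> n \<longrightarrow> (\<forall>x\<in>S. dderiv vs f differentiable (at x)))"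

lemma smooth_on_su: "smooth_on S f \<longleftrightarrow> open S \<and> (\<forall>n. su n S f)"
  unfolding smooth_on_def su_def by blast

lemma su_cong:
  fixes S :: "'a::euclidean_space set"
  assumes "su n S F" "\<And>y. y \<in> S \<Longrightarrow> F y = G y"
  shows "su n S G"
proof -
  have op: "open S" using assms(1) unfolding su_def by blast
  show ?thesis unfolding su_def
  proof (intro conjI op allI impI ballI)
    fix vs :: "'a list" and x assume l: "length vs \<le> n" and x: "x \<in> S"
    have "dderiv vs F differentiable (at x)" using assms(1) l x unfolding su_def by blast
    moreover have "\<And>y. y \<in> S \<Longrightarrow> dderiv vs F y = dderiv vs G y"
      by (rule dderiv_open_cong[OF op assms(2)])
    ultimately show "dderiv vs G differentiable (at x)"
      using diff_open_cong[OF op x, of "dderiv vs F" "dderiv vs G"] by blast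
  qed
qed

lemma su_mono: "su n S F \<Longrightarrow> m \<le> n \<Longrightarrow> su m S F"
  unfolding su_def by auto

lemma su_deriv: "su (Suc n) S F \<Longrightarrow> su n S (dderiv [v] F)"
  unfolding su_def by (metis dderiv_snoc length_append_singleton not_less_eq_eq)

lemma su_subset: "su n S F \<Longrightarrow> T \<subseteq> S \<Longrightarrow> open T \<Longrightarrow> su n T F"
  unfolding su_def by auto

lemma su_const: assumes op: "open S" shows "su n S (\<lambda>_. c)"
proof -
  have "dderiv vs (\<lambda>_. c) = (\<lambda>_. c) \<or> dderiv vs (\<lambda>_. c) = (\<lambda>_. 0)" for vs
  proof (induction vs)
    case (Cons v vs)
    then have "dderiv (v#vs) (\<lambda>_. c) = (\<lambda>_. 0)"
      by auto
    then show ?case by simp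
  qed simp
  note H = this
  show ?thesis unfolding su_def
  proof (intro conjI allI impI ballI op)
    fix vs x show "dderiv vs (\<lambda>_. c) differentiable (at x)" using H[of vs] by auto
  qed
qed

lemma fd_linear_comp:
  assumes "bounded_linear L" "G differentiable (at x)"
  shows "frechet_derivative (\<lambda>y. L (G y)) (at x) = (\<lambda>w. L (frechet_derivative G (at x) w))"
  using assms bounded_linear.has_derivative[OF assms(1) frechet_derivative_works[THEN iffD1, OF assms(2)]]
  by (metis frechet_derivative_at)

lemma fd_add:
  assumes "G differentiable (at x)" "H differentiable (at x)"
  shows "frechet_derivative (\<lambda>y. G y + H y) (at x) = (\<lambda>w. frechet_derivative G (at x) w + frechet_derivative H (at x) w)"
  using has_derivative_add[OF frechet_derivative_works[THEN iffD1, OF assms(1)] frechet_derivative_works[THEN iffD1, OF assms(2)]]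
  by (metis frechet_derivative_at)

lemma fd_bilinear:
  assumes "bounded_bilinear pr" "G differentiable (at x)" "H differentiable (at x)"
  shows "frechet_derivative (\<lambda>y. pr (G y) (H y)) (at x) = (\<lambda>w. pr (G x) (frechet_derivative H (at x) w) + pr (frechet_derivative G (at x) w) (H x))"
  using bounded_bilinear.FDERIV[OF assms(1) frechet_derivative_works[THEN iffD1, OF assms(2)] frechet_derivative_works[THEN iffD1, OF assms(3)]]
  by (metis frechet_derivative_at)

lemma dderiv_linear:
  assumes "bounded_linear L" "su n S F" "length ws \<le> Suc n" "x \<in> S"
  shows "dderiv ws (\<lambda>x. L (F x)) x = L (dderiv ws F x)"
  using assms(3,4)
proof (induction ws arbitrary: x)
  case Nil then show ?case by simp
next
  case (Cons w ws)
  have op: "open S" using assms(2) su_def by blast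
  have d: "dderiv ws F differentiable (at x)" using assms(2) Cons.prems by (auto simp: su_def)
  have "frechet_derivative (dderiv ws (\<lambda>x. L (F x))) (at x) = frechet_derivative (\<lambda>y. L (dderiv ws F y)) (at x)"
    by (rule fd_open_cong[OF op Cons.prems(2)]) (use Cons in auto)
  then show ?case using fd_linear_comp[OF assms(1) d] by simp
qed

lemma su_linear:
  fixes S :: "'a::euclidean_space set"
  assumes "bounded_linear L" "su n S F"
  shows "su n S (\<lambda>x. L (F x))"
proof -
  have op: "open S" using assms(2) su_def by blast
  show ?thesis unfolding su_def
  proof (intro conjI op allI impI ballI)
    fix vs :: "'a list" and x assume l: "length vs \<le> n" and x: "x \<in> S"
    have "dderiv vs F differentiable (at x)" using assms(2) l x by (auto simp: su_def)
    then have "(\<lambda>y. L (dderiv vs F y)) differentiable (at x)"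
      using bounded_linear_imp_differentiable[OF assms(1)] differentiable_chain_at[of "dderiv vs F" x L]
      by (simp add: o_def)
    then show "dderiv vs (\<lambda>x. L (F x)) differentiable (at x)"
      using diff_open_cong[OF op x, of "dderiv vs (\<lambda>x. L (F x))" "\<lambda>y. L (dderiv vs F y)"]
        dderiv_linear[OF assms] l by simp
  qed
qed

lemma dderiv_add:
  assumes "su n S F" "su n S G" "length ws \<le> Suc n" "x \<in> S"
  shows "dderiv ws (\<lambda>x. F x + G x) x = dderiv ws F x + dderiv ws G x"
  using assms(3,4)
proof (induction ws arbitrary: x)
  case Nil then show ?case by simp
next
  case (Cons w ws)
  have op: "open S" using assms(2) su_def by blast
  have d: "dderiv ws F differentiable (at x)" "dderiv ws G differentiable (at x)" using assms(1,2) Cons.prems by (auto simp: su_def)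
  have "frechet_derivative (dderiv ws (\<lambda>x. F x + G x)) (at x) = frechet_derivative (\<lambda>y. dderiv ws F y + dderiv ws G y) (at x)"
    by (rule fd_open_cong[OF op Cons.prems(2)]) (use Cons in auto)
  then show ?case using fd_add[OF d] by simp
qed

lemma su_add:
  fixes S :: "'a::euclidean_space set"
  assumes "su n S F" "su n S G"
  shows "su n S (\<lambda>x. F x + G x)"
proof -
  have op: "open S" using assms(2) su_def by blast
  show ?thesis unfolding su_def
  proof (intro conjI op allI impI ballI)
    fix vs :: "'a list" and x assume l: "length vs \<le> n" and x: "x \<in> S"
    have "dderiv vs F differentiable (at x)" "dderiv vs G differentiable (at x)" using assms l x by (auto simp: su_def)
    then have "(\<lambda>y. dderiv vs F y + dderiv vs G y) differentiable (at x)" by auto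
    then show "dderiv vs (\<lambda>x. F x + G x) differentiable (at x)"
      using diff_open_cong[OF op x, of "dderiv vs (\<lambda>x. F x + G x)" "\<lambda>y. dderiv vs F y + dderiv vs G y"]
        dderiv_add[OF assms] l by simp
  qed
qed

lemma su_minus: "su n S F \<Longrightarrow> su n S (\<lambda>x. - F x)"
  using su_linear[OF bounded_linear_minus[OF bounded_linear_ident]] by blast

lemma su_diff:
  assumes "su n S F" "su n S G"
  shows "su n S (\<lambda>x. F x - G x)"
  using su_add[OF assms(1) su_minus[OF assms(2)]] by simp

lemma su_sum:
  assumes "finite A" "open S" "\<And>b. b \<in> A \<Longrightarrow> su n S (H b)"
  shows "su n S (\<lambda>x. \<Sum>b\<in>A. H b x)"
  using assms(1,3)
proof (induction A rule: finite_induct)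
  case empty then show ?case using su_const[OF assms(2)] by simp
next
  case (insert a A)
  then show ?case using su_add[of n S "H a" "\<lambda>x. \<Sum>b\<in>A. H b x"] by simp
qed

lemma su_diff0: "su n S F \<Longrightarrow> x \<in> S \<Longrightarrow> F differentiable (at x)"
  unfolding su_def by (metis dderiv.simps(1) le0 list.size(3))

lemma su_bilinear:
  fixes S :: "'a::euclidean_space set"
  assumes bl: "bounded_bilinear pr"
  shows "su n S F \<Longrightarrow> su n S G \<Longrightarrow> su n S (\<lambda>x. pr (F x) (G x))"
proof (induction n arbitrary: F G)
  case 0
  have op: "open S" using 0 su_def by blast
  have "(\<lambda>x. pr (F x) (G x)) differentiable (at x)" if "x \<in> S" for x
    using bounded_bilinear.FDERIV[OF bl frechet_derivative_works[THEN iffD1, OF su_diff0[OF 0(1) that]]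
       frechet_derivative_works[THEN iffD1, OF su_diff0[OF 0(2) that]]] differentiable_def by blast
  then show ?case using op unfolding su_def by auto
next
  case (Suc n)
  have op: "open S" using Suc su_def by blast
  have d0: "(\<lambda>x. pr (F x) (G x)) differentiable (at x)" if "x \<in> S" for x
    using bounded_bilinear.FDERIV[OF bl frechet_derivative_works[THEN iffD1, OF su_diff0[OF Suc(2) that]]
       frechet_derivative_works[THEN iffD1, OF su_diff0[OF Suc(3) that]]] differentiable_def by blast
  show ?case unfolding su_def
  proof (intro conjI op allI impI ballI)
    fix ws :: "'a list" and x assume l: "length ws \<le> Suc n" and x: "x \<in> S"
    show "dderiv ws (\<lambda>x. pr (F x) (G x)) differentiable (at x)"
    proof (cases ws rule: rev_exhaust)
      case Nil then show ?thesis using d0 x by simp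
    next
      case (snoc vs v)
      have lv: "length vs \<le> n" using l snoc by simp
      define Q where "Q = (\<lambda>y. pr (F y) (dderiv [v] G y) + pr (dderiv [v] F y) (G y))"
      have sF: "su n S F" "su n S G" using Suc.prems su_mono le_SucI by blast+
      have sF': "su n S (dderiv [v] F)" "su n S (dderiv [v] G)" using Suc.prems su_deriv by blast+
      have sQ: "su n S Q" unfolding Q_def
        by (rule su_add[OF Suc.IH[OF sF(1) sF'(2)] Suc.IH[OF sF'(1) sF(2)]])
      have eq: "dderiv [v] (\<lambda>x. pr (F x) (G x)) y = Q y" if "y \<in> S" for y
        using fd_bilinear[OF bl su_diff0[OF Suc(2) that] su_diff0[OF Suc(3) that]] unfolding Q_def by simp
      have "su n S (dderiv [v] (\<lambda>x. pr (F x) (G x)))"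
        using su_cong[OF sQ, of "dderiv [v] (\<lambda>x. pr (F x) (G x))"] eq by simp
      then have "dderiv vs (dderiv [v] (\<lambda>x. pr (F x) (G x))) differentiable (at x)"
        using lv x unfolding su_def by blast
      then show ?thesis unfolding snoc dderiv_snoc .
    qed
  qed
qed

lemma su_ident:
  fixes S :: "'a::euclidean_space set"
  assumes op: "open S" shows "su n S (\<lambda>x. x)"
  unfolding su_def
proof (intro conjI op allI impI ballI)
  fix ws :: "'a list" and x assume l: "length ws \<le> n" and x: "x \<in> S"
  show "dderiv ws (\<lambda>x. x) differentiable (at x)"
  proof (cases ws rule: rev_exhaust)
    case Nil then show ?thesis by simp
  next
    case (snoc vs v)
    have e: "dderiv [v] (\<lambda>x::'a. x) = (\<lambda>_. v)" by simp
    have "dderiv vs (\<lambda>_. v) differentiable (at x)" using su_const[OF op, of n v] x l snoc unfolding su_def by simp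
    then show ?thesis unfolding snoc dderiv_snoc e .
  qed
qed

lemma fd_expand:
  fixes F :: "'e::euclidean_space \<Rightarrow> 'b::real_normed_vector"
  assumes "F differentiable (at y)"
  shows "frechet_derivative F (at y) u = (\<Sum>b\<in>Basis. (u \<bullet> b) *\<^sub>R frechet_derivative F (at y) b)"
proof -
  have lin: "linear (frechet_derivative F (at y))"
    using assms frechet_derivative_works has_derivative_linear by blast
  have "frechet_derivative F (at y) u = frechet_derivative F (at y) (\<Sum>b\<in>Basis. (u \<bullet> b) *\<^sub>R b)"
    by (simp only: euclidean_representation)
  also have "\<dots> = (\<Sum>b\<in>Basis. frechet_derivative F (at y) ((u \<bullet> b) *\<^sub>R b))"
    by (rule linear_sum[OF lin])
  also have "\<dots> = (\<Sum>b\<in>Basis. (u \<bullet> b) *\<^sub>R frechet_derivative F (at y) b)"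
    by (rule sum.cong[OF refl]) (rule linear_scale[OF lin])
  finally show ?thesis .
qed

lemma su_comp:
  fixes S :: "'a::euclidean_space set" and T :: "'e::euclidean_space set"
    and F :: "'e \<Rightarrow> 'b::real_normed_vector"
  shows "su n T F \<Longrightarrow> su n S G \<Longrightarrow> G ` S \<subseteq> T \<Longrightarrow> su n S (\<lambda>x. F (G x))"
proof (induction n arbitrary: F G)
  case 0
  have op: "open S" using 0 su_def by blast
  have "(\<lambda>x. F (G x)) differentiable (at x)" if "x \<in> S" for x
  proof -
    have "G x \<in> T" using that 0(3) by blast
    then have "F differentiable (at (G x))" by (rule su_diff0[OF 0(1)])
    then have "(F \<circ> G) differentiable (at x)" by (rule differentiable_chain_at[OF su_diff0[OF 0(2) that]])
    then show ?thesis by (simp add: o_def)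
  qed
  then show ?case using op unfolding su_def by auto
next
  case (Suc n)
  have op: "open S" using Suc(3) unfolding su_def by blast
  have d0: "(\<lambda>x. F (G x)) differentiable (at x)" if "x \<in> S" for x
  proof -
    have "G x \<in> T" using that Suc(4) by blast
    then have "F differentiable (at (G x))" by (rule su_diff0[OF Suc(2)])
    then have "(F \<circ> G) differentiable (at x)" by (rule differentiable_chain_at[OF su_diff0[OF Suc(3) that]])
    then show ?thesis by (simp add: o_def)
  qed
  show ?case unfolding su_def
  proof (intro conjI op allI impI ballI)
    fix ws :: "'a list" and x assume l: "length ws \<le> Suc n" and x: "x \<in> S"
    show "dderiv ws (\<lambda>x. F (G x)) differentiable (at x)"
    proof (cases ws rule: rev_exhaust)
      case Nil then show ?thesis using d0 x by simp
    next
      case (snoc vs v)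
      have lv: "length vs \<le> n" using l snoc by simp
      define Q where "Q = (\<lambda>y. \<Sum>b\<in>(Basis::'e set). (dderiv [v] G y \<bullet> b) *\<^sub>R dderiv [b] F (G y))"
      have sQ: "su n S Q" unfolding Q_def
      proof (rule su_sum[OF finite_Basis op])
        fix b :: 'e assume "b \<in> Basis"
        have s1: "su n S (\<lambda>y. dderiv [v] G y \<bullet> b)"
          by (rule su_linear[OF bounded_linear_inner_left su_deriv[OF Suc.prems(2)]])
        have s2: "su n S (\<lambda>y. dderiv [b] F (G y))"
          by (rule Suc.IH[OF su_deriv[OF Suc.prems(1)] su_mono[OF Suc.prems(2)] Suc.prems(3)]) simp
        show "su n S (\<lambda>y. (dderiv [v] G y \<bullet> b) *\<^sub>R dderiv [b] F (G y))"
          by (rule su_bilinear[OF bounded_bilinear_scaleR s1 s2])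
      qed
      have eq: "dderiv [v] (\<lambda>x. F (G x)) y = Q y" if "y \<in> S" for y
      proof -
        have dG: "(G has_derivative frechet_derivative G (at y)) (at y)"
          using su_diff0[OF Suc(3) that] frechet_derivative_works by blast
        have dFG: "F differentiable (at (G y))" using su_diff0[OF Suc(2)] that Suc(4) by auto
        have dF: "(F has_derivative frechet_derivative F (at (G y))) (at (G y))"
          using dFG frechet_derivative_works by blast
        have "frechet_derivative (\<lambda>x. F (G x)) (at y) = frechet_derivative F (at (G y)) \<circ> frechet_derivative G (at y)"
        proof -
          have "((\<lambda>x. F (G x)) has_derivative (frechet_derivative F (at (G y)) \<circ> frechet_derivative G (at y))) (at y)"
            using diff_chain_at[OF dG dF] by (simp add: o_def)
          then show ?thesis by (rule frechet_derivative_at[symmetric])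
        qed
        then have "dderiv [v] (\<lambda>x. F (G x)) y = frechet_derivative F (at (G y)) (frechet_derivative G (at y) v)"
          by simp
        also have "\<dots> = Q y" unfolding Q_def by (subst fd_expand[OF dFG]) simp
        finally show ?thesis .
      qed
      have "su n S (dderiv [v] (\<lambda>x. F (G x)))"
        apply (rule su_cong[OF sQ]) apply (rule eq[symmetric]) apply assumption done
      then have "dderiv vs (dderiv [v] (\<lambda>x. F (G x))) differentiable (at x)"
        using lv x unfolding su_def by blast
      then show ?thesis unfolding snoc dderiv_snoc .
    qed
  qed
qed

definition fk :: "nat \<Rightarrow> real \<Rightarrow> real" where
  "fk k t = (if t > 0 then (inverse t)^k * exp (- inverse t) else 0)"

lemma fk_tendsto0: "(fk m \<longlongrightarrow> 0) (at 0)"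
proof (rule filterlim_split_at)
  have "eventually (\<lambda>y. fk m y = 0) (at_left (0::real))"
  proof -
    have "eventually (\<lambda>x. x \<in> {-1<..<0}) (at_left (0::real))" by (rule eventually_at_left_real) simp
    then show ?thesis by (rule eventually_mono) (auto simp: fk_def)
  qed
  then show "(fk m \<longlongrightarrow> 0) (at_left 0)" by (rule tendsto_eventually)
next
  have "((\<lambda>x::real. x ^ m / exp x) \<longlongrightarrow> 0) at_top" by (rule tendsto_power_div_exp_0)
  moreover have "eventually (\<lambda>x. x ^ m / exp x = fk m (inverse x)) at_top"
    using eventually_gt_at_top[of 0]
    by eventually_elim (simp add: fk_def exp_minus field_simps)
  ultimately have "((\<lambda>x. fk m (inverse x)) \<longlongrightarrow> 0) at_top"
    using tendsto_cong by fastforce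
  then show "(fk m \<longlongrightarrow> 0) (at_right 0)" by (simp add: filterlim_at_right_to_top)
qed

lemma fk_deriv: "(fk k has_real_derivative (fk (k+2) t - real k * fk (k+1) t)) (at t)"
proof -
  consider "t > 0" | "t < 0" | "t = 0" by linarith
  then show ?thesis
  proof cases
    case 1
    have "((\<lambda>y. (inverse y)^k * exp (- inverse y)) has_real_derivative
           (real k * (inverse t)^(k-1) * (- inverse (t^2))) * exp (- inverse t) + (inverse t)^k * (exp (- inverse t) * inverse (t^2))) (at t)"
      using 1 by (auto intro!: derivative_eq_intros simp: power2_eq_square)
    moreover have "(real k * (inverse t)^(k-1) * (- inverse (t^2))) * exp (- inverse t) + (inverse t)^k * (exp (- inverse t) * inverse (t^2))
        = fk (k+2) t - real k * fk (k+1) t"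
    proof (cases k)
      case 0 then show ?thesis using 1 by (simp add: fk_def power2_eq_square field_simps)
    next
      case (Suc j) then show ?thesis using 1 by (simp add: fk_def power2_eq_square field_simps)
    qed
    ultimately have "((\<lambda>y. (inverse y)^k * exp (- inverse y)) has_real_derivative (fk (k+2) t - real k * fk (k+1) t)) (at t)"
      by simp
    then show ?thesis
      by (rule has_field_derivative_transform_within_open[where S="{0<..}"]) (use 1 in \<open>auto simp: fk_def\<close>)
  next
    case 2
    have "((\<lambda>y. 0) has_real_derivative 0) (at t)" by simp
    then have "(fk k has_real_derivative 0) (at t)"
      by (rule has_field_derivative_transform_within_open[where S="{..<0}"]) (use 2 in \<open>auto simp: fk_def\<close>)
    then show ?thesis using 2 by (simp add: fk_def)
  next
    case 3
    have "(\<lambda>y. (fk k y - fk k 0) / (y - 0)) = fk (Suc k)"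
      by (rule ext) (simp add: fk_def field_simps)
    then have "(fk k has_real_derivative 0) (at 0)"
      unfolding has_field_derivative_iff using fk_tendsto0[of "Suc k"] by simp
    then show ?thesis using 3 by (simp add: fk_def)
  qed
qed

inductive good :: "(real \<Rightarrow> real) \<Rightarrow> bool" where
  g_fk: "good (fk k)"
| g_add: "good F \<Longrightarrow> good G \<Longrightarrow> good (\<lambda>t. F t + G t)"
| g_scale: "good F \<Longrightarrow> good (\<lambda>t. c * F t)"

lemma good_deriv: "good F \<Longrightarrow> \<exists>F'. good F' \<and> (\<forall>t. (F has_real_derivative F' t) (at t))"
proof (induction rule: good.induct)
  case (g_fk k)
  have "good (\<lambda>t. fk (k+2) t + (- real k) * fk (k+1) t)"
    by (intro good.g_add good.g_scale good.g_fk)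
  then show ?case using fk_deriv[of k] by (intro exI[of _ "\<lambda>t. fk (k+2) t + (- real k) * fk (k+1) t"]) simp
next
  case (g_add F G)
  then obtain F' G' where "good F'" "good G'" "\<forall>t. (F has_real_derivative F' t) (at t)" "\<forall>t. (G has_real_derivative G' t) (at t)"
    by blast
  then show ?case by (intro exI[of _ "\<lambda>t. F' t + G' t"]) (auto intro: good.intros derivative_eq_intros)
next
  case (g_scale F c)
  then obtain F' where "good F'" "\<forall>t. (F has_real_derivative F' t) (at t)" by blast
  then show ?case by (intro exI[of _ "\<lambda>t. c * F' t"]) (auto intro: good.intros derivative_eq_intros)
qed

lemma good_dderiv: "good F \<Longrightarrow> good (dderiv vs F)"
proof (induction vs)
  case Nil then show ?case by simp
next
  case (Cons v vs)
  then obtain G' where G': "good G'" "\<forall>t. (dderiv vs F has_real_derivative G' t) (at t)"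
    using good_deriv by blast
  have "frechet_derivative (dderiv vs F) (at x) = (\<lambda>h. G' x * h)" for x
    using G'(2) frechet_derivative_at unfolding has_field_derivative_def by metis
  then have "dderiv (v # vs) F = (\<lambda>x. v * G' x)" by (auto simp: mult.commute)
  then show ?case using G'(1) by (simp add: g_scale)
qed

lemma good_differentiable: "good F \<Longrightarrow> F differentiable (at x)"
  using good_deriv real_differentiable_def differentiable_def
  by (metis has_field_derivative_imp_has_derivative)

lemma su_fk0: "su n UNIV (fk 0)"
  unfolding su_def using good_differentiable[OF good_dderiv[OF g_fk]] by auto

definition bump :: "'e::euclidean_space \<Rightarrow> real \<Rightarrow> 'e \<Rightarrow> real" where
  "bump c r y = fk 0 (r^2 - (y - c) \<bullet> (y - c))"

lemma bump_smooth: fixes c :: "'e::euclidean_space" shows "smooth_on UNIV (bump c r)"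
proof -
  have "su n UNIV (bump c r)" for n
  proof -
    have s1: "su n UNIV (\<lambda>y::'e. y - c)" by (rule su_diff[OF su_ident su_const]) simp_all
    have s2: "su n UNIV (\<lambda>y::'e. (y - c) \<bullet> (y - c))" by (rule su_bilinear[OF bounded_bilinear_inner s1 s1])
    have s3: "su n UNIV (\<lambda>y::'e. r^2 - (y - c) \<bullet> (y - c))" by (rule su_diff[OF su_const s2]) simp
    show ?thesis unfolding bump_def by (rule su_comp[OF su_fk0 s3]) simp
  qed
  then show ?thesis unfolding smooth_on_su by simp
qed

lemma bump_center: "r > 0 \<Longrightarrow> bump c r c \<noteq> 0"
  by (simp add: bump_def fk_def)

lemma bump_supp: assumes "r > 0" "bump c r y \<noteq> 0" shows "y \<in> cball c r"
proof -
  note assms(2)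
  then have "(y - c) \<bullet> (y - c) < r^2" by (simp add: bump_def fk_def split: if_splits)
  then have "norm (y - c) ^2 < r^2" by (simp add: power2_norm_eq_inner)
  then have "norm (y - c) < r" using assms(1) power_less_imp_less_base[of "norm (y - c)" 2 r] by simp
  then show ?thesis by (simp add: dist_norm norm_minus_commute)
qed

lemma smooth_on_open: "smooth_on S F \<Longrightarrow> open S"
  unfolding smooth_on_def by blast

lemma smooth_on_local:
  assumes "open Om" "\<And>y. y \<in> Om \<Longrightarrow> \<exists>O'. open O' \<and> y \<in> O' \<and> smooth_on O' F"
  shows "smooth_on Om F"
  using assms unfolding smooth_on_def by blast

lemma smooth_on_scaleR:
  assumes "smooth_on S F" "smooth_on T G" "T \<subseteq> S"
  shows "smooth_on T (\<lambda>x. F x *\<^sub>R G x)"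
proof -
  have oT: "open T" using assms(2) smooth_on_open by blast
  have "su n T (\<lambda>x. F x *\<^sub>R G x)" for n
    by (rule su_bilinear[OF bounded_bilinear_scaleR su_subset[OF _ assms(3) oT]])
       (use assms(1,2) smooth_on_su in blast)+
  then show ?thesis using oT smooth_on_su by blast
qed

lemma smooth_on_diff:
  assumes "smooth_on S F" "smooth_on S G"
  shows "smooth_on S (\<lambda>x. F x - G x)"
proof -
  have oT: "open S" using assms(2) smooth_on_open by blast
  have "su n S (\<lambda>x. F x - G x)" for n
    by (rule su_diff) (use assms(1,2) smooth_on_su in blast)+
  then show ?thesis using oT smooth_on_su by blast
qed

lemma smooth_mapD: "smooth_map_on Atl S f \<Longrightarrow> (V, \<phi>) \<in> Atl \<Longrightarrow> smooth_on (\<phi> ` (V \<inter> S)) (f \<circ> inv_into V \<phi>)"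
  unfolding smooth_map_on_def by blast

lemma smult_sec:
  assumes "smooth_fun Atl f" "s \<in> sections Atl U g"
  shows "sec_smult f s \<in> sections Atl U g"
proof -
  have s: "\<forall>i p. p \<notin> U i \<longrightarrow> s i p = 0" "\<And>i. smooth_map_on Atl (U i) (s i)"
      "\<And>i j p. p \<in> U i \<inter> U j \<Longrightarrow> s i p = blinfun_apply (g i j p) (s j p)"
    using assms(2) unfolding sections_def by auto
  have sm: "smooth_map_on Atl (U i) (\<lambda>p. f p *\<^sub>R s i p)" for i
    unfolding smooth_map_on_def
  proof (intro ballI, clarify)
    fix V \<phi> assume c: "(V, \<phi>) \<in> Atl"
    have A: "smooth_on (\<phi> ` (V \<inter> UNIV)) (f \<circ> inv_into V \<phi>)"
      using assms(1) c unfolding smooth_fun_def by (rule smooth_mapD)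
    have B: "smooth_on (\<phi> ` (V \<inter> U i)) (s i \<circ> inv_into V \<phi>)" using s(2) c by (rule smooth_mapD)
    have "smooth_on (\<phi> ` (V \<inter> U i)) (\<lambda>x. (f \<circ> inv_into V \<phi>) x *\<^sub>R (s i \<circ> inv_into V \<phi>) x)"
      by (rule smooth_on_scaleR[OF A B]) auto
    then show "smooth_on (\<phi> ` (V \<inter> U i)) ((\<lambda>p. f p *\<^sub>R s i p) \<circ> inv_into V \<phi>)"
      by (simp add: o_def)
  qed
  show ?thesis unfolding sections_def sec_smult_def mem_Collect_eq
  proof (intro conjI allI impI)
    fix i p assume "p \<notin> U i" then show "f p *\<^sub>R s i p = 0" using s(1) by simp
  next
    fix i show "smooth_map_on Atl (U i) (\<lambda>p. f p *\<^sub>R s i p)" by (rule sm)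
  next
    fix i j p assume "p \<in> U i \<inter> U j"
    then show "f p *\<^sub>R s i p = blinfun_apply (g i j p) (f p *\<^sub>R s j p)"
      using s(3)[of p i j] by (simp add: blinfun.scaleR_right)
  qed
qed

lemma diff_sec:
  assumes "s \<in> sections Atl U g" "t \<in> sections Atl U g"
  shows "sec_diff s t \<in> sections Atl U g"
proof -
  have s: "\<forall>i p. p \<notin> U i \<longrightarrow> s i p = 0" "\<And>i. smooth_map_on Atl (U i) (s i)"
      "\<And>i j p. p \<in> U i \<inter> U j \<Longrightarrow> s i p = blinfun_apply (g i j p) (s j p)"
    using assms(1) unfolding sections_def by auto
  have t: "\<forall>i p. p \<notin> U i \<longrightarrow> t i p = 0" "\<And>i. smooth_map_on Atl (U i) (t i)"
      "\<And>i j p. p \<in> U i \<inter> U j \<Longrightarrow> t i p = blinfun_apply (g i j p) (t j p)"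
    using assms(2) unfolding sections_def by auto
  have sm: "smooth_map_on Atl (U i) (\<lambda>p. s i p - t i p)" for i
    unfolding smooth_map_on_def
  proof (intro ballI, clarify)
    fix V \<phi> assume c: "(V, \<phi>) \<in> Atl"
    have A: "smooth_on (\<phi> ` (V \<inter> U i)) (s i \<circ> inv_into V \<phi>)" using s(2) c by (rule smooth_mapD)
    have B: "smooth_on (\<phi> ` (V \<inter> U i)) (t i \<circ> inv_into V \<phi>)" using t(2) c by (rule smooth_mapD)
    have "smooth_on (\<phi> ` (V \<inter> U i)) (\<lambda>x. (s i \<circ> inv_into V \<phi>) x - (t i \<circ> inv_into V \<phi>) x)"
      by (rule smooth_on_diff[OF A B])
    then show "smooth_on (\<phi> ` (V \<inter> U i)) ((\<lambda>p. s i p - t i p) \<circ> inv_into V \<phi>)"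
      by (simp add: o_def)
  qed
  show ?thesis unfolding sections_def sec_diff_def mem_Collect_eq
  proof (intro conjI allI impI)
    fix i p assume "p \<notin> U i" then show "s i p - t i p = 0" using s(1) t(1) by simp
  next
    fix i show "smooth_map_on Atl (U i) (\<lambda>p. s i p - t i p)" by (rule sm)
  next
    fix i j p assume "p \<in> U i \<inter> U j"
    then show "s i p - t i p = blinfun_apply (g i j p) (s j p - t j p)"
      using s(3)[of p i j] t(3)[of p i j] by (simp add: blinfun.diff_right)
  qed
qed

lemma bump_section:
  fixes X :: "'M topology" and Atl :: "('M set \<times> ('M \<Rightarrow> 'e::euclidean_space)) set"
    and U :: "'i \<Rightarrow> 'M set" and g :: "'i \<Rightarrow> 'i \<Rightarrow> 'M \<Rightarrow> ('v::euclidean_space \<Rightarrow>\<^sub>L 'v)"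
  assumes vb: "vector_bundle X Atl U g"
  shows "\<exists>z \<in> sections Atl U g. \<exists>i. z i p \<noteq> 0"
proof -
  have man: "smooth_manifold X Atl" and covU: "(\<Union>i. U i) = UNIV"
    and gsm: "\<And>i j. smooth_map_on Atl (U i \<inter> U j) (g i j)"
    and gid: "\<And>i p. p \<in> U i \<Longrightarrow> g i i p = id_blinfun"
    and gco: "\<And>i j k p. p \<in> U i \<inter> U j \<inter> U k \<Longrightarrow> g i j p o\<^sub>L g j k p = g i k p"
    using vb unfolding vector_bundle_def by auto
  have top: "topspace X = UNIV" and haus: "Hausdorff_space X" and covA: "\<Union> (fst ` Atl) = UNIV"
    using man unfolding smooth_manifold_def by auto
  have charts: "openin X V \<and> open (\<phi> ` V) \<and> homeomorphic_map (subtopology X V) (top_of_set (\<phi> ` V)) \<phi>"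
    if "(V, \<phi>) \<in> Atl" for V \<phi>
    using man that unfolding smooth_manifold_def by fast
  have trans: "smooth_on (\<phi> ` (V \<inter> W)) (\<psi> \<circ> inv_into V \<phi>)"
    if "(V, \<phi>) \<in> Atl" "(W, \<psi>) \<in> Atl" for V \<phi> W \<psi>
    using man that unfolding smooth_manifold_def by fast
  have inj: "inj_on \<phi> V" if "(V, \<phi>) \<in> Atl" for V \<phi>
    using homeomorphic_imp_injective_map[of "subtopology X V" "top_of_set (\<phi> ` V)" \<phi>] charts[OF that] top
    by simp
  obtain i where pi: "p \<in> U i" using covU by blast
  obtain V \<phi> where c: "(V, \<phi>) \<in> Atl" and pV: "p \<in> V" using covA by fastforce
  have O0: "open (\<phi> ` (V \<inter> U i))"
    using smooth_on_open[OF smooth_mapD[OF gsm[of i i] c]] by simp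
  obtain e where e: "e > 0" "ball (\<phi> p) e \<subseteq> \<phi> ` (V \<inter> U i)"
    using open_contains_ball O0 pV pi by blast
  define r where "r = e / 2"
  define c0 where "c0 = \<phi> p"
  have r: "r > 0" using e r_def by simp
  have cb: "cball c0 r \<subseteq> \<phi> ` (V \<inter> U i)"
  proof -
    have "cball c0 r \<subseteq> ball c0 e" using e(1) unfolding r_def by (auto simp: subset_eq)
    then show ?thesis using e(2) unfolding c0_def by blast
  qed
  define K where "K = {q \<in> V. \<phi> q \<in> cball c0 r}"
  have KVU: "K \<subseteq> V \<inter> U i"
  proof
    fix q assume q: "q \<in> K"
    then have "\<phi> q \<in> \<phi> ` (V \<inter> U i)" using cb K_def by blast
    then obtain q' where "q' \<in> V \<inter> U i" "\<phi> q = \<phi> q'" by blast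
    then show "q \<in> V \<inter> U i" using q inj[OF c] K_def by (metis (no_types, lifting) IntD1 inj_on_contraD mem_Collect_eq)
  qed
  have phiK: "\<phi> ` K = cball c0 r"
  proof
    show "\<phi> ` K \<subseteq> cball c0 r" unfolding K_def by blast
    show "cball c0 r \<subseteq> \<phi> ` K"
    proof
      fix y assume y: "y \<in> cball c0 r"
      then obtain q where "q \<in> V \<inter> U i" "y = \<phi> q" using cb by blast
      then show "y \<in> \<phi> ` K" using y unfolding K_def by blast
    qed
  qed
  have Kc: "closedin X K"
  proof -
    have "compactin (top_of_set (\<phi> ` V)) (\<phi> ` K)"
      unfolding phiK compactin_subtopology using cb by auto
    then have "compactin (subtopology X V) K"
      using homeomorphic_map_compactness_eq[OF conjunct2[OF conjunct2[OF charts[OF c]]], of K] top K_def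
      by auto
    then have "compactin X K" by (simp add: compactin_subtopology)
    then show ?thesis by (rule compactin_imp_closedin[OF haus])
  qed
  define e0 :: 'v where "e0 = (SOME b. b \<in> Basis)"
  have e0: "e0 \<noteq> 0" unfolding e0_def by (metis ex_in_conv nonempty_Basis someI_ex nonzero_Basis)
  define \<beta> where "\<beta> = bump c0 r"
  define z where "z = (\<lambda>j q. if q \<in> V \<and> q \<in> U i \<and> q \<in> U j then \<beta> (\<phi> q) *\<^sub>R blinfun_apply (g j i q) e0 else 0)"
  have zi: "z i p \<noteq> 0"
    using pV pi gid[OF pi] bump_center[OF r, of c0] e0 unfolding z_def \<beta>_def c0_def by simp
  have zsm: "smooth_map_on Atl (U j) (z j)" for j
    unfolding smooth_map_on_def
  proof (intro ballI, clarify)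
    fix W \<psi> assume cW: "(W, \<psi>) \<in> Atl"
    have oO: "open (\<psi> ` (W \<inter> U j))"
      using smooth_on_open[OF smooth_mapD[OF gsm[of j j] cW]] by simp
    show "smooth_on (\<psi> ` (W \<inter> U j)) (z j \<circ> inv_into W \<psi>)"
    proof (rule smooth_on_local[OF oO])
      fix y assume "y \<in> \<psi> ` (W \<inter> U j)"
      then obtain q where qW: "q \<in> W" and qj: "q \<in> U j" and yq: "y = \<psi> q" by blast
      show "\<exists>O'. open O' \<and> y \<in> O' \<and> smooth_on O' (z j \<circ> inv_into W \<psi>)"
      proof (cases "q \<in> K")
        case True
        define O1 where "O1 = \<psi> ` (W \<inter> (U j \<inter> U i)) \<inter> \<psi> ` (W \<inter> V)"
        have sg: "smooth_on (\<psi> ` (W \<inter> (U j \<inter> U i))) (g j i \<circ> inv_into W \<psi>)"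
          by (rule smooth_mapD[OF gsm cW])
        have sp: "smooth_on (\<psi> ` (W \<inter> V)) (\<phi> \<circ> inv_into W \<psi>)" by (rule trans[OF cW c])
        have oO1: "open O1" unfolding O1_def using smooth_on_open[OF sg] smooth_on_open[OF sp] by blast
        have yO1: "y \<in> O1" unfolding O1_def using True KVU qW qj yq by blast
        define H where "H = (\<lambda>y'. \<beta> ((\<phi> \<circ> inv_into W \<psi>) y') *\<^sub>R blinfun_apply ((g j i \<circ> inv_into W \<psi>) y') e0)"
        have "su n O1 H" for n
        proof -
          have S1: "su n O1 (\<lambda>y'. \<beta> ((\<phi> \<circ> inv_into W \<psi>) y'))"
          proof -
            have a1: "su n UNIV (bump c0 r)" using bump_smooth[of c0 r] smooth_on_su by blast
            have a2: "su n O1 (\<phi> \<circ> inv_into W \<psi>)"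
              by (rule su_subset[of n "\<psi> ` (W \<inter> V)"]) (use sp smooth_on_su oO1 O1_def in auto)
            show ?thesis unfolding \<beta>_def using su_comp[OF a1 a2] by simp
          qed
          have S2: "su n O1 (\<lambda>y'. blinfun_apply ((g j i \<circ> inv_into W \<psi>) y') e0)"
          proof -
            have a2: "su n O1 (g j i \<circ> inv_into W \<psi>)"
              by (rule su_subset[of n "\<psi> ` (W \<inter> (U j \<inter> U i))"]) (use sg smooth_on_su oO1 O1_def in auto)
            show ?thesis using su_linear[OF blinfun.bounded_linear_left a2] by simp
          qed
          show ?thesis unfolding H_def by (rule su_bilinear[OF bounded_bilinear_scaleR S1 S2])
        qed
        then have sH: "smooth_on O1 H" using oO1 smooth_on_su by blast
        have "H y' = (z j \<circ> inv_into W \<psi>) y'" if yO: "y' \<in> O1" for y'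
        proof -
          obtain q1 where q1: "q1 \<in> W" "q1 \<in> U j" "q1 \<in> U i" "y' = \<psi> q1" using yO O1_def by blast
          obtain q2 where q2: "q2 \<in> W" "q2 \<in> V" "y' = \<psi> q2" using yO O1_def by blast
          have "q1 = q2" using inj[OF cW] q1 q2 by (metis inj_onD)
          moreover have "inv_into W \<psi> y' = q1" using inv_into_f_f[OF inj[OF cW] q1(1)] q1(4) by simp
          ultimately show ?thesis unfolding H_def z_def using q1 q2 by simp
        qed
        then have "smooth_on O1 (z j \<circ> inv_into W \<psi>)"
          using sH oO1 smooth_on_su su_cong by metis
        then show ?thesis using oO1 yO1 by blast
      next
        case False
        have hW: "homeomorphic_map (subtopology X W) (top_of_set (\<psi> ` W)) \<psi>" using charts[OF cW] by blast
        have "closedin (subtopology X W) (W \<inter> K)"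
          unfolding closedin_subtopology using Kc by blast
        then have "closedin (top_of_set (\<psi> ` W)) (\<psi> ` (W \<inter> K))"
          using homeomorphic_map_closedness_eq[OF hW] by blast
        then obtain T where T: "closed T" "\<psi> ` (W \<inter> K) = \<psi> ` W \<inter> T"
          unfolding closedin_closed by blast
        define O2 where "O2 = \<psi> ` (W \<inter> U j) - T"
        have oO2: "open O2" unfolding O2_def using oO T(1) by blast
        have yO2: "y \<in> O2"
        proof -
          have "y \<notin> T"
          proof
            assume "y \<in> T"
            then have "y \<in> \<psi> ` (W \<inter> K)" using T(2) qW yq by blast
            then obtain q'' where "q'' \<in> W \<inter> K" "y = \<psi> q''" by blast
            then have "q'' = q" using inj[OF cW] qW yq by (metis IntD1 inj_onD)
            then show False using False \<open>q'' \<in> W \<inter> K\<close> by blast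
          qed
          then show ?thesis unfolding O2_def using qW qj yq by blast
        qed
        have "(\<lambda>_. 0) y' = (z j \<circ> inv_into W \<psi>) y'" if yO: "y' \<in> O2" for y'
        proof -
          obtain q' where q': "q' \<in> W" "q' \<in> U j" "y' = \<psi> q'" "y' \<notin> T" using yO O2_def by blast
          have iq: "inv_into W \<psi> y' = q'" using inv_into_f_f[OF inj[OF cW] q'(1)] q'(3) by simp
          have "q' \<notin> K" using q' T(2) by blast
          then have "\<beta> (\<phi> q') = 0" if "q' \<in> V" using bump_supp[OF r, of c0 "\<phi> q'"] that K_def \<beta>_def by blast
          then show ?thesis using iq unfolding z_def by auto
        qed
        moreover have "smooth_on O2 (\<lambda>_. 0::'v)" using oO2 su_const smooth_on_su by blast
        ultimately have "smooth_on O2 (z j \<circ> inv_into W \<psi>)"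
          using oO2 smooth_on_su su_cong by metis
        then show ?thesis using oO2 yO2 by blast
      qed
    qed
  qed
  have zs: "z \<in> sections Atl U g"
    unfolding sections_def mem_Collect_eq
  proof (intro conjI allI impI)
    fix j q assume "q \<notin> U j" then show "z j q = 0" unfolding z_def by simp
  next
    fix j show "smooth_map_on Atl (U j) (z j)" by (rule zsm)
  next
    fix j k q assume q: "q \<in> U j \<inter> U k"
    show "z j q = blinfun_apply (g j k q) (z k q)"
    proof (cases "q \<in> V \<and> q \<in> U i")
      case True
      then have "g j k q o\<^sub>L g k i q = g j i q" using q gco by blast
      then have "blinfun_apply (g j k q) (blinfun_apply (g k i q) e0) = blinfun_apply (g j i q) e0"
        by (metis blinfun_apply_blinfun_compose)
      then show ?thesis using True q unfolding z_def by (simp add: blinfun.scaleR_right)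
    next
      case False then show ?thesis unfolding z_def by (auto simp: blinfun.zero_right)
    qed
  qed
  show ?thesis using zs zi by blast
qed

theorem proposition2p5:
  fixes X :: "'M topology"
    and Atl :: "('M set \<times> ('M \<Rightarrow> 'e::euclidean_space)) set"
    and U :: "'i \<Rightarrow> 'M set"
    and g :: "'i \<Rightarrow> 'i \<Rightarrow> 'M \<Rightarrow> ('v::euclidean_space \<Rightarrow>\<^sub>L 'v)"
    and a :: "('i \<Rightarrow> 'M \<Rightarrow> 'v) \<Rightarrow> ('M \<Rightarrow> real) \<Rightarrow> ('M \<Rightarrow> real)"
    and nabla :: "('i \<Rightarrow> 'M \<Rightarrow> 'v) \<Rightarrow> ('i \<Rightarrow> 'M \<Rightarrow> 'v) \<Rightarrow> ('i \<Rightarrow> 'M \<Rightarrow> 'v)"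
  assumes "anchored_bundle X Atl U g a"
    and "connection X Atl U g a nabla"
  shows "(\<forall>x \<in> sections Atl U g. \<forall>y \<in> sections Atl U g.
            (\<forall>z \<in> sections Atl U g. \<forall>z' \<in> sections Atl U g.
               curvature nabla x y (sec_add z z') = sec_add (curvature nabla x y z) (curvature nabla x y z')) \<and>
            (\<forall>f z. smooth_fun Atl f \<longrightarrow> z \<in> sections Atl U g \<longrightarrow>
               curvature nabla x y (sec_smult f z) = sec_smult f (curvature nabla x y z)))
         \<longleftrightarrow> dull_algebroid X Atl U g (nabla_bracket nabla) a"
proof -
  define \<Gamma> where "\<Gamma> = sections Atl U g"
  have C1: "\<And>x y. x \<in> \<Gamma> \<Longrightarrow> y \<in> \<Gamma> \<Longrightarrow> nabla x y \<in> \<Gamma>"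
    using assms(2) unfolding connection_def Let_def \<Gamma>_def by blast
  have C2: "\<And>x x' y. x \<in> \<Gamma> \<Longrightarrow> x' \<in> \<Gamma> \<Longrightarrow> y \<in> \<Gamma> \<Longrightarrow> nabla (sec_add x x') y = sec_add (nabla x y) (nabla x' y)"
    using assms(2) unfolding connection_def Let_def \<Gamma>_def by blast
  have C3: "\<And>x y y'. x \<in> \<Gamma> \<Longrightarrow> y \<in> \<Gamma> \<Longrightarrow> y' \<in> \<Gamma> \<Longrightarrow> nabla x (sec_add y y') = sec_add (nabla x y) (nabla x y')"
    using assms(2) unfolding connection_def Let_def \<Gamma>_def by blast
  have C4: "\<And>c x y. x \<in> \<Gamma> \<Longrightarrow> y \<in> \<Gamma> \<Longrightarrow> nabla (sec_scale c x) y = sec_scale c (nabla x y)"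
    using assms(2) unfolding connection_def Let_def \<Gamma>_def by blast
  have C5: "\<And>c x y. x \<in> \<Gamma> \<Longrightarrow> y \<in> \<Gamma> \<Longrightarrow> nabla x (sec_scale c y) = sec_scale c (nabla x y)"
    using assms(2) unfolding connection_def Let_def \<Gamma>_def by blast
  have C6: "\<And>f x y. smooth_fun Atl f \<Longrightarrow> x \<in> \<Gamma> \<Longrightarrow> y \<in> \<Gamma> \<Longrightarrow> nabla (sec_smult f x) y = sec_smult f (nabla x y)"
    using assms(2) unfolding connection_def Let_def \<Gamma>_def by blast
  have C7: "\<And>f x y. smooth_fun Atl f \<Longrightarrow> x \<in> \<Gamma> \<Longrightarrow> y \<in> \<Gamma> \<Longrightarrow>
      nabla x (sec_smult f y) = sec_add (sec_smult (a x f) y) (sec_smult f (nabla x y))"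
    using assms(2) unfolding connection_def Let_def \<Gamma>_def by blast
  have vb: "vector_bundle X Atl U g" using assms(1) unfolding anchored_bundle_def by blast
  have vf: "\<And>x f. x \<in> \<Gamma> \<Longrightarrow> smooth_fun Atl f \<Longrightarrow> smooth_fun Atl (a x f)"
    using assms(1) unfolding anchored_bundle_def vector_field_def \<Gamma>_def by blast
  have sm: "\<And>f s. smooth_fun Atl f \<Longrightarrow> s \<in> \<Gamma> \<Longrightarrow> sec_smult f s \<in> \<Gamma>"
    unfolding \<Gamma>_def by (rule smult_sec)
  have br: "\<And>x y. x \<in> \<Gamma> \<Longrightarrow> y \<in> \<Gamma> \<Longrightarrow> nabla_bracket nabla x y \<in> \<Gamma>"
    unfolding nabla_bracket_def \<Gamma>_def by (rule diff_sec) (use C1 \<Gamma>_def in auto)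
  have curv_sm: "curvature nabla x y (sec_smult f z) =
      (\<lambda>i p. (a x (a y f) p - a y (a x f) p - a (nabla_bracket nabla x y) f p) *\<^sub>R z i p
              + f p *\<^sub>R curvature nabla x y z i p)"
    if xG: "x \<in> \<Gamma>" and yG: "y \<in> \<Gamma>" and zG: "z \<in> \<Gamma>" and fs: "smooth_fun Atl f" for x y z f
  proof -
    define B where "B = nabla_bracket nabla x y"
    have BG: "B \<in> \<Gamma>" unfolding B_def using br xG yG by blast
    have sy: "smooth_fun Atl (a y f)" and sx: "smooth_fun Atl (a x f)" using vf[OF yG fs] vf[OF xG fs] by blast+
    have e1: "nabla y (sec_smult f z) = sec_add (sec_smult (a y f) z) (sec_smult f (nabla y z))"
      by (rule C7[OF fs yG zG])
    have e2: "nabla x (sec_add (sec_smult (a y f) z) (sec_smult f (nabla y z)))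
        = sec_add (nabla x (sec_smult (a y f) z)) (nabla x (sec_smult f (nabla y z)))"
      by (rule C3[OF xG sm[OF sy zG] sm[OF fs C1[OF yG zG]]])
    have e3: "nabla x (sec_smult (a y f) z) = sec_add (sec_smult (a x (a y f)) z) (sec_smult (a y f) (nabla x z))"
      by (rule C7[OF sy xG zG])
    have e4: "nabla x (sec_smult f (nabla y z)) = sec_add (sec_smult (a x f) (nabla y z)) (sec_smult f (nabla x (nabla y z)))"
      by (rule C7[OF fs xG C1[OF yG zG]])
    have e1': "nabla x (sec_smult f z) = sec_add (sec_smult (a x f) z) (sec_smult f (nabla x z))"
      by (rule C7[OF fs xG zG])
    have e2': "nabla y (sec_add (sec_smult (a x f) z) (sec_smult f (nabla x z)))
        = sec_add (nabla y (sec_smult (a x f) z)) (nabla y (sec_smult f (nabla x z)))"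
      by (rule C3[OF yG sm[OF sx zG] sm[OF fs C1[OF xG zG]]])
    have e3': "nabla y (sec_smult (a x f) z) = sec_add (sec_smult (a y (a x f)) z) (sec_smult (a x f) (nabla y z))"
      by (rule C7[OF sx yG zG])
    have e4': "nabla y (sec_smult f (nabla x z)) = sec_add (sec_smult (a y f) (nabla x z)) (sec_smult f (nabla y (nabla x z)))"
      by (rule C7[OF fs yG C1[OF xG zG]])
    have e5: "nabla B (sec_smult f z) = sec_add (sec_smult (a B f) z) (sec_smult f (nabla B z))"
      by (rule C7[OF fs BG zG])
    have "curvature nabla x y (sec_smult f z) =
        sec_diff (sec_diff (nabla x (nabla y (sec_smult f z))) (nabla y (nabla x (sec_smult f z)))) (nabla B (sec_smult f z))"
      unfolding curvature_def B_def ..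
    also have "\<dots> = (\<lambda>i p. (a x (a y f) p - a y (a x f) p - a B f p) *\<^sub>R z i p
              + f p *\<^sub>R curvature nabla x y z i p)"
      unfolding e1 e2 e3 e4 e1' e2' e3' e4' e5
      unfolding curvature_def B_def[symmetric] sec_add_def sec_diff_def sec_smult_def
      by (intro ext) (simp add: algebra_simps)
    finally show ?thesis unfolding B_def .
  qed
  have curv_add: "curvature nabla x y (sec_add z z') = sec_add (curvature nabla x y z) (curvature nabla x y z')"
    if xG: "x \<in> \<Gamma>" and yG: "y \<in> \<Gamma>" and zG: "z \<in> \<Gamma>" and z'G: "z' \<in> \<Gamma>" for x y z z'
  proof -
    define B where "B = nabla_bracket nabla x y"
    have BG: "B \<in> \<Gamma>" unfolding B_def using br xG yG by blast
    have e1: "nabla y (sec_add z z') = sec_add (nabla y z) (nabla y z')" by (rule C3[OF yG zG z'G])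
    have e2: "nabla x (sec_add (nabla y z) (nabla y z')) = sec_add (nabla x (nabla y z)) (nabla x (nabla y z'))"
      by (rule C3[OF xG C1[OF yG zG] C1[OF yG z'G]])
    have e1': "nabla x (sec_add z z') = sec_add (nabla x z) (nabla x z')" by (rule C3[OF xG zG z'G])
    have e2': "nabla y (sec_add (nabla x z) (nabla x z')) = sec_add (nabla y (nabla x z)) (nabla y (nabla x z'))"
      by (rule C3[OF yG C1[OF xG zG] C1[OF xG z'G]])
    have e3: "nabla B (sec_add z z') = sec_add (nabla B z) (nabla B z')" by (rule C3[OF BG zG z'G])
    have "curvature nabla x y (sec_add z z') =
        sec_diff (sec_diff (nabla x (nabla y (sec_add z z'))) (nabla y (nabla x (sec_add z z')))) (nabla B (sec_add z z'))"
      unfolding curvature_def B_def ..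
    also have "\<dots> = sec_add (curvature nabla x y z) (curvature nabla x y z')"
      unfolding e1 e2 e1' e2' e3
      unfolding curvature_def B_def[symmetric] sec_add_def sec_diff_def
      by (intro ext) (simp add: algebra_simps)
    finally show ?thesis .
  qed
  show ?thesis
    unfolding \<Gamma>_def[symmetric]
  proof
    assume H: "\<forall>x\<in>\<Gamma>. \<forall>y\<in>\<Gamma>.
            (\<forall>z\<in>\<Gamma>. \<forall>z'\<in>\<Gamma>. curvature nabla x y (sec_add z z') = sec_add (curvature nabla x y z) (curvature nabla x y z')) \<and>
            (\<forall>f z. smooth_fun Atl f \<longrightarrow> z \<in> \<Gamma> \<longrightarrow> curvature nabla x y (sec_smult f z) = sec_smult f (curvature nabla x y z))"
    show "dull_algebroid X Atl U g (nabla_bracket nabla) a"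
      unfolding dull_algebroid_def Let_def \<Gamma>_def[symmetric]
    proof (intro conjI ballI allI impI)
      show "anchored_bundle X Atl U g a" by (rule assms(1))
    next
      fix x y assume "x \<in> \<Gamma>" "y \<in> \<Gamma>" then show "nabla_bracket nabla x y \<in> \<Gamma>" by (rule br)
    next
      fix x y assume "x \<in> \<Gamma>" "y \<in> \<Gamma>"
      show "nabla_bracket nabla x y = sec_scale (- 1) (nabla_bracket nabla y x)"
        unfolding nabla_bracket_def sec_diff_def sec_scale_def by (intro ext) simp
    next
      fix x y y' assume G: "x \<in> \<Gamma>" "y \<in> \<Gamma>" "y' \<in> \<Gamma>"
      show "nabla_bracket nabla x (sec_add y y') = sec_add (nabla_bracket nabla x y) (nabla_bracket nabla x y')"
        unfolding nabla_bracket_def C3[OF G] C2[OF G(2,3,1)]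
        unfolding sec_diff_def sec_add_def by (intro ext) (simp add: algebra_simps)
    next
      fix c x y assume G: "x \<in> \<Gamma>" "y \<in> \<Gamma>"
      show "nabla_bracket nabla x (sec_scale c y) = sec_scale c (nabla_bracket nabla x y)"
        unfolding nabla_bracket_def C5[OF G] C4[OF G(2,1)]
        unfolding sec_diff_def sec_scale_def by (intro ext) (simp add: algebra_simps)
    next
      fix f x y assume fs: "smooth_fun Atl f" and G: "x \<in> \<Gamma>" "y \<in> \<Gamma>"
      show "nabla_bracket nabla x (sec_smult f y) = sec_add (sec_smult f (nabla_bracket nabla x y)) (sec_smult (a x f) y)"
        unfolding nabla_bracket_def C7[OF fs G] C6[OF fs G(2,1)]
        unfolding sec_diff_def sec_add_def sec_smult_def by (intro ext) (simp add: algebra_simps)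
    next
      fix x y h assume G: "x \<in> \<Gamma>" "y \<in> \<Gamma>" and hs: "smooth_fun Atl h"
      show "a (nabla_bracket nabla x y) h = (\<lambda>p. a x (a y h) p - a y (a x h) p)"
      proof
        fix p
        obtain z i where zG: "z \<in> \<Gamma>" and zi: "z i p \<noteq> 0" using bump_section[OF vb, of p] \<Gamma>_def by blast
        have "curvature nabla x y (sec_smult h z) = sec_smult h (curvature nabla x y z)"
          using conjunct2[OF bspec[OF bspec[OF H G(1)] G(2)]] hs zG by blast
        then have E: "(\<lambda>i p. (a x (a y h) p - a y (a x h) p - a (nabla_bracket nabla x y) h p) *\<^sub>R z i p
              + h p *\<^sub>R curvature nabla x y z i p) = sec_smult h (curvature nabla x y z)"
          by (rule trans[OF sym[OF curv_sm[OF G zG hs]]])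
        have "(a x (a y h) p - a y (a x h) p - a (nabla_bracket nabla x y) h p) *\<^sub>R z i p
              + h p *\<^sub>R curvature nabla x y z i p = h p *\<^sub>R curvature nabla x y z i p"
          using fun_cong[OF fun_cong[OF E, of i], of p] by (simp add: sec_smult_def)
        then have "(a x (a y h) p - a y (a x h) p - a (nabla_bracket nabla x y) h p) *\<^sub>R z i p = 0"
          by simp
        then have "a x (a y h) p - a y (a x h) p - a (nabla_bracket nabla x y) h p = 0" using zi by simp
        then show "a (nabla_bracket nabla x y) h p = a x (a y h) p - a y (a x h) p" by simp
      qed
    qed
  next
    assume D: "dull_algebroid X Atl U g (nabla_bracket nabla) a"
    have anc: "\<And>x y h. x \<in> \<Gamma> \<Longrightarrow> y \<in> \<Gamma> \<Longrightarrow> smooth_fun Atl h \<Longrightarrow>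
        a (nabla_bracket nabla x y) h = (\<lambda>p. a x (a y h) p - a y (a x h) p)"
      using D unfolding dull_algebroid_def Let_def \<Gamma>_def by blast
    show "\<forall>x\<in>\<Gamma>. \<forall>y\<in>\<Gamma>.
            (\<forall>z\<in>\<Gamma>. \<forall>z'\<in>\<Gamma>. curvature nabla x y (sec_add z z') = sec_add (curvature nabla x y z) (curvature nabla x y z')) \<and>
            (\<forall>f z. smooth_fun Atl f \<longrightarrow> z \<in> \<Gamma> \<longrightarrow> curvature nabla x y (sec_smult f z) = sec_smult f (curvature nabla x y z))"
    proof (intro ballI conjI allI impI)
      fix x y z z' assume "x \<in> \<Gamma>" "y \<in> \<Gamma>" "z \<in> \<Gamma>" "z' \<in> \<Gamma>"
      then show "curvature nabla x y (sec_add z z') = sec_add (curvature nabla x y z) (curvature nabla x y z')"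
        by (rule curv_add)
    next
      fix x y f z assume G: "x \<in> \<Gamma>" "y \<in> \<Gamma>" and fs: "smooth_fun Atl f" and zG: "z \<in> \<Gamma>"
      show "curvature nabla x y (sec_smult f z) = sec_smult f (curvature nabla x y z)"
        unfolding curv_sm[OF G zG fs] unfolding anc[OF G fs] sec_smult_def by (intro ext) simp
    qed
  qed
qed

end
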